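(* Let $k$ be a commutative ring, $P$ a $k$-plethory, $A$ a $P$-ring, and $I,J$ $P$-ideals of $A$. Then $IJ$ is a $P$-ideal.
   Context: All rings are commutative with unit. A $k$-$k$-biring is a commutative $k$-algebra with coaddition $\Delta^+$, comultiplication $\Delta^\times$, counits $\varepsilon^+,\varepsilon^\times$, antipode and $\beta\colon k\to\mathrm{Hom}_{k\text{-alg}}(S,k)$, making it a commutative $k$-algebra object in the opposite of the category of commutative $k$-algebras. The composition product $S\odot_kR$ is the $k$-algebra generated by $s\odot r$, ring-linear in $s$ with $c\odot r=c$, with $s\odot(r+r')$, $s\odot(rr')$, $s\odot c$ expanded via $\Delta^+(s),\Delta^\times(s),\beta(c)(s)$. A $k$-plethory is a monoid $(P,\circ,e)$ in $k$-$k$-birings under $\odot_k$ with unit $k[e]$. A $P$-ring is a commutative $k$-algebra with an associative unital action $P\odot_kR\to R$. An ideal $I$ of a $P$-ring $R$ is a $P$-ideal if there is a $P$-action on $R/I$ making $R\to R/I$ a morphism of $P$-rings. *)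

theory Defs
  imports "HOL-Algebra.QuotRing" "HOL-Algebra.Ideal_Product"
begin

definition kalg :: "'k ring \<Rightarrow> 'r ring \<Rightarrow> ('k \<Rightarrow> 'r) \<Rightarrow> bool" where
  "kalg k R eta \<longleftrightarrow> cring k \<and> cring R \<and> eta \<in> ring_hom k R"

definition kalg_hom :: "'k ring \<Rightarrow> 'r ring \<Rightarrow> ('k \<Rightarrow> 'r) \<Rightarrow> 's ring \<Rightarrow> ('k \<Rightarrow> 's)
    \<Rightarrow> ('r \<Rightarrow> 's) \<Rightarrow> bool" where
  "kalg_hom k R etaR S etaS h \<longleftrightarrow>
     h \<in> ring_hom R S \<and> (\<forall>c \<in> carrier k. h (etaR c) = etaS c)"

definition rsum :: "('r, 'm) ring_scheme \<Rightarrow> 'r list \<Rightarrow> 'r" where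
  "rsum R xs = foldr (\<lambda>x acc. x \<oplus>\<^bsub>R\<^esub> acc) xs \<zero>\<^bsub>R\<^esub>"

text \<open>An element of the n-fold tensor power of the k-algebra (P, eta) over k
is represented by a formal k-linear combination of pure tensors, i.e. by a
list of pairs (c, [p1,...,pn]) standing for the sum of c (p1 x ... x pn).
Two such representatives denote the same tensor iff they are related by
teq, the smallest equivalence relation making formal sums a free k-module
on words and imposing k-multilinearity in each tensor slot.\<close>

type_synonym ('k, 'p) fsum = "('k \<times> 'p list) list"

definition fs_wf :: "'k ring \<Rightarrow> 'p ring \<Rightarrow> nat \<Rightarrow> ('k, 'p) fsum \<Rightarrow> bool" where
  "fs_wf k P n x \<longleftrightarrow>
     (\<forall>(c, w) \<in> set x. c \<in> carrier k \<and> length w = n \<and> set w \<subseteq> carrier P)"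

inductive teq :: "'k ring \<Rightarrow> 'p ring \<Rightarrow> ('k \<Rightarrow> 'p) \<Rightarrow> nat
    \<Rightarrow> ('k, 'p) fsum \<Rightarrow> ('k, 'p) fsum \<Rightarrow> bool"
  for k P eta n where
  refl: "fs_wf k P n x \<Longrightarrow> teq k P eta n x x"
| sym: "teq k P eta n x y \<Longrightarrow> teq k P eta n y x"
| trans: "teq k P eta n x y \<Longrightarrow> teq k P eta n y z \<Longrightarrow> teq k P eta n x z"
| app: "teq k P eta n x x' \<Longrightarrow> teq k P eta n y y' \<Longrightarrow> teq k P eta n (x @ y) (x' @ y')"
| swap: "fs_wf k P n x \<Longrightarrow> fs_wf k P n y \<Longrightarrow> teq k P eta n (x @ y) (y @ x)"
| zero: "fs_wf k P n [(\<zero>\<^bsub>k\<^esub>, w)] \<Longrightarrow> teq k P eta n [(\<zero>\<^bsub>k\<^esub>, w)] []"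
| merge: "fs_wf k P n [(c, w), (d, w)] \<Longrightarrow>
           teq k P eta n [(c, w), (d, w)] [(c \<oplus>\<^bsub>k\<^esub> d, w)]"
| addl: "fs_wf k P n [(c, xs @ [s] @ ys), (c, xs @ [t] @ ys)] \<Longrightarrow>
           teq k P eta n [(c, xs @ [s \<oplus>\<^bsub>P\<^esub> t] @ ys)] [(c, xs @ [s] @ ys), (c, xs @ [t] @ ys)]"
| scal: "d \<in> carrier k \<Longrightarrow> fs_wf k P n [(c, xs @ [s] @ ys)] \<Longrightarrow>
           teq k P eta n [(c, xs @ [eta d \<otimes>\<^bsub>P\<^esub> s] @ ys)] [(c \<otimes>\<^bsub>k\<^esub> d, xs @ [s] @ ys)]"

definition fs_mult :: "'k ring \<Rightarrow> 'p ring \<Rightarrow> ('k, 'p) fsum \<Rightarrow> ('k, 'p) fsum \<Rightarrow> ('k, 'p) fsum" where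
  "fs_mult k P x y =
     concat (map (\<lambda>(c, v). map (\<lambda>(d, w). (c \<otimes>\<^bsub>k\<^esub> d, map2 (\<lambda>a b. a \<otimes>\<^bsub>P\<^esub> b) v w)) y) x)"

text \<open>A "setoid algebra": k-algebra operations on representatives together
with the equality relation on representatives.\<close>

record ('k, 'a) salg =
  s_add :: "'a \<Rightarrow> 'a \<Rightarrow> 'a"
  s_mul :: "'a \<Rightarrow> 'a \<Rightarrow> 'a"
  s_zero :: 'a
  s_one :: 'a
  s_eta :: "'k \<Rightarrow> 'a"
  s_eq :: "'a \<Rightarrow> 'a \<Rightarrow> bool"

definition s_sum :: "('k, 'a) salg \<Rightarrow> 'a list \<Rightarrow> 'a" where
  "s_sum A xs = foldr (s_add A) xs (s_zero A)"

definition tpow :: "'k ring \<Rightarrow> 'p ring \<Rightarrow> ('k \<Rightarrow> 'p) \<Rightarrow> nat \<Rightarrow> ('k, ('k, 'p) fsum) salg" where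
  "tpow k P eta n =
    \<lparr> s_add = (@), s_mul = fs_mult k P, s_zero = [],
      s_one = [(\<one>\<^bsub>k\<^esub>, replicate n \<one>\<^bsub>P\<^esub>)],
      s_eta = (\<lambda>c. [(c, replicate n \<one>\<^bsub>P\<^esub>)]),
      s_eq = teq k P eta n \<rparr>"

text \<open>The universal i-th point P -> P^{(x) n}, f |-> 1 x .. x f x .. x 1.\<close>

definition upt :: "'k ring \<Rightarrow> 'p ring \<Rightarrow> nat \<Rightarrow> nat \<Rightarrow> 'p \<Rightarrow> ('k, 'p) fsum" where
  "upt k P n i = (\<lambda>f. [(\<one>\<^bsub>k\<^esub>, (replicate n \<one>\<^bsub>P\<^esub>)[i := f])])"

text \<open>Co-structure data of a k-k-biring S: coaddition, comultiplication
(valued in the tensor square), additive and multiplicative counits, antipode,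
and co-k-linear structure beta : k -> Hom_{k-alg}(S,k).\<close>

record ('k, 'p) biring_data =
  dplus :: "'p \<Rightarrow> ('k, 'p) fsum"
  dtimes :: "'p \<Rightarrow> ('k, 'p) fsum"
  eplus :: "'p \<Rightarrow> 'k"
  etimes :: "'p \<Rightarrow> 'k"
  antip :: "'p \<Rightarrow> 'p"
  beta :: "'k \<Rightarrow> 'p \<Rightarrow> 'k"

text \<open>W_S(A) = Hom_{k-alg}(S, A), with the k-algebra structure induced by the
co-structure of S: (x+y)(f) = sum c x(f') y(f'') over Delta+(f) = sum c f' x f'', etc.\<close>

definition Wsalg :: "'p ring \<Rightarrow> ('k, 'p) biring_data \<Rightarrow> ('k, 'a) salg \<Rightarrow> ('k, 'p \<Rightarrow> 'a) salg" where
  "Wsalg P B A =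
    \<lparr> s_add = (\<lambda>x y f. s_sum A (map (\<lambda>(c, w). s_mul A (s_eta A c) (s_mul A (x (w ! 0)) (y (w ! 1))))
                                  (dplus B f))),
      s_mul = (\<lambda>x y f. s_sum A (map (\<lambda>(c, w). s_mul A (s_eta A c) (s_mul A (x (w ! 0)) (y (w ! 1))))
                                  (dtimes B f))),
      s_zero = (\<lambda>f. s_eta A (eplus B f)),
      s_one = (\<lambda>f. s_eta A (etimes B f)),
      s_eta = (\<lambda>c f. s_eta A (beta B c f)),
      s_eq = (\<lambda>x y. \<forall>f \<in> carrier P. s_eq A (x f) (y f)) \<rparr>"

definition Wneg :: "('k, 'p) biring_data \<Rightarrow> ('p \<Rightarrow> 'a) \<Rightarrow> 'p \<Rightarrow> 'a" where
  "Wneg B x = (\<lambda>f. x (antip B f))"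

definition fs_kalg_map :: "'k ring \<Rightarrow> 'p ring \<Rightarrow> ('k \<Rightarrow> 'p) \<Rightarrow> nat \<Rightarrow> ('p \<Rightarrow> ('k, 'p) fsum) \<Rightarrow> bool" where
  "fs_kalg_map k P eta n \<phi> \<longleftrightarrow>
     (\<forall>s \<in> carrier P. fs_wf k P n (\<phi> s)) \<and>
     (\<forall>s \<in> carrier P. \<forall>t \<in> carrier P.
        teq k P eta n (\<phi> (s \<oplus>\<^bsub>P\<^esub> t)) (\<phi> s @ \<phi> t) \<and>
        teq k P eta n (\<phi> (s \<otimes>\<^bsub>P\<^esub> t)) (fs_mult k P (\<phi> s) (\<phi> t))) \<and>
     teq k P eta n (\<phi> \<one>\<^bsub>P\<^esub>) [(\<one>\<^bsub>k\<^esub>, replicate n \<one>\<^bsub>P\<^esub>)] \<and>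
     (\<forall>c \<in> carrier k. teq k P eta n (\<phi> (eta c)) [(c, replicate n \<one>\<^bsub>P\<^esub>)])"

text \<open>The co-ring axioms are the k-algebra axioms of W_P(A), checked (Yoneda)
at the universal points in the tensor powers of P.\<close>

definition biring :: "'k ring \<Rightarrow> 'p ring \<Rightarrow> ('k \<Rightarrow> 'p) \<Rightarrow> ('k, 'p) biring_data \<Rightarrow> bool" where
  "biring k P eta B \<longleftrightarrow>
     kalg k P eta \<and>
     fs_kalg_map k P eta 2 (dplus B) \<and>
     fs_kalg_map k P eta 2 (dtimes B) \<and>
     kalg_hom k P eta k id (eplus B) \<and>
     kalg_hom k P eta k id (etimes B) \<and>
     kalg_hom k P eta P eta (antip B) \<and>
     (\<forall>c \<in> carrier k. kalg_hom k P eta k id (beta B c)) \<and>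
     (let W1 = Wsalg P B (tpow k P eta 1);
          W2 = Wsalg P B (tpow k P eta 2);
          W3 = Wsalg P B (tpow k P eta 3);
          W0 = Wsalg P B (tpow k P eta 0);
          p = upt k P in
       s_eq W3 (s_add W3 (s_add W3 (p 3 0) (p 3 1)) (p 3 2))
               (s_add W3 (p 3 0) (s_add W3 (p 3 1) (p 3 2))) \<and>
       s_eq W2 (s_add W2 (p 2 0) (p 2 1)) (s_add W2 (p 2 1) (p 2 0)) \<and>
       s_eq W1 (s_add W1 (s_zero W1) (p 1 0)) (p 1 0) \<and>
       s_eq W1 (s_add W1 (Wneg B (p 1 0)) (p 1 0)) (s_zero W1) \<and>
       s_eq W3 (s_mul W3 (s_mul W3 (p 3 0) (p 3 1)) (p 3 2))
               (s_mul W3 (p 3 0) (s_mul W3 (p 3 1) (p 3 2))) \<and>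
       s_eq W2 (s_mul W2 (p 2 0) (p 2 1)) (s_mul W2 (p 2 1) (p 2 0)) \<and>
       s_eq W1 (s_mul W1 (s_one W1) (p 1 0)) (p 1 0) \<and>
       s_eq W3 (s_mul W3 (p 3 0) (s_add W3 (p 3 1) (p 3 2)))
               (s_add W3 (s_mul W3 (p 3 0) (p 3 1)) (s_mul W3 (p 3 0) (p 3 2))) \<and>
       (\<forall>c \<in> carrier k. \<forall>d \<in> carrier k.
          s_eq W0 (s_eta W0 (c \<oplus>\<^bsub>k\<^esub> d)) (s_add W0 (s_eta W0 c) (s_eta W0 d)) \<and>
          s_eq W0 (s_eta W0 (c \<otimes>\<^bsub>k\<^esub> d)) (s_mul W0 (s_eta W0 c) (s_eta W0 d))) \<and>
       s_eq W0 (s_eta W0 \<zero>\<^bsub>k\<^esub>) (s_zero W0) \<and>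
       s_eq W0 (s_eta W0 \<one>\<^bsub>k\<^esub>) (s_one W0))"

text \<open>A function act : P x R -> R, (f, r) |-> f(r), defines a k-algebra map
P (.) R -> R, f (.) r |-> f(r), iff it respects the defining relations of the
composition product.\<close>

definition pact :: "'k ring \<Rightarrow> 'p ring \<Rightarrow> ('k \<Rightarrow> 'p) \<Rightarrow> ('k, 'p) biring_data
    \<Rightarrow> 'r ring \<Rightarrow> ('k \<Rightarrow> 'r) \<Rightarrow> ('p \<Rightarrow> 'r \<Rightarrow> 'r) \<Rightarrow> bool" where
  "pact k P eta B R etaR act \<longleftrightarrow>
     (\<forall>f \<in> carrier P. \<forall>r \<in> carrier R. act f r \<in> carrier R) \<and>
     (\<forall>r \<in> carrier R. kalg_hom k P eta R etaR (\<lambda>f. act f r)) \<and>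
     (\<forall>f \<in> carrier P. \<forall>r \<in> carrier R. \<forall>r' \<in> carrier R.
        act f (r \<oplus>\<^bsub>R\<^esub> r') =
          rsum R (map (\<lambda>(c, w). etaR c \<otimes>\<^bsub>R\<^esub> act (w ! 0) r \<otimes>\<^bsub>R\<^esub> act (w ! 1) r') (dplus B f)) \<and>
        act f (r \<otimes>\<^bsub>R\<^esub> r') =
          rsum R (map (\<lambda>(c, w). etaR c \<otimes>\<^bsub>R\<^esub> act (w ! 0) r \<otimes>\<^bsub>R\<^esub> act (w ! 1) r') (dtimes B f))) \<and>
     (\<forall>f \<in> carrier P. \<forall>c \<in> carrier k. act f (etaR c) = etaR (beta B c f))"

text \<open>A k-plethory (P, cmp, e): a k-k-biring with a composition
P (.) P -> P, f (.) g |-> cmp f g, which is associative with unit e, such that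
the composition and the unit map k[e] -> P are maps of k-k-birings.
The biring structure on P (.) P is the one with W_{P(.)P} = W_P o W_P; the
composition is a biring map iff phi |-> (r |-> (s |-> phi(s o r))) is a map of
k-algebras W_P(A) -> W_P(W_P(A)), which (Yoneda) is checked at the universal
points.\<close>

definition Phi :: "('p \<Rightarrow> 'p \<Rightarrow> 'p) \<Rightarrow> ('p \<Rightarrow> 'a) \<Rightarrow> 'p \<Rightarrow> 'p \<Rightarrow> 'a" where
  "Phi cmp x = (\<lambda>r s. x (cmp s r))"

definition plethory :: "'k ring \<Rightarrow> 'p ring \<Rightarrow> ('k \<Rightarrow> 'p) \<Rightarrow> ('k, 'p) biring_data
    \<Rightarrow> ('p \<Rightarrow> 'p \<Rightarrow> 'p) \<Rightarrow> 'p \<Rightarrow> bool" where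
  "plethory k P eta B cmp e \<longleftrightarrow>
     biring k P eta B \<and>
     e \<in> carrier P \<and>
     pact k P eta B P eta cmp \<and>
     (\<forall>f \<in> carrier P. \<forall>g \<in> carrier P. \<forall>h \<in> carrier P. cmp (cmp f g) h = cmp f (cmp g h)) \<and>
     (\<forall>f \<in> carrier P. cmp e f = f \<and> cmp f e = f) \<and>
     teq k P eta 2 (dplus B e) [(\<one>\<^bsub>k\<^esub>, [e, \<one>\<^bsub>P\<^esub>]), (\<one>\<^bsub>k\<^esub>, [\<one>\<^bsub>P\<^esub>, e])] \<and>
     teq k P eta 2 (dtimes B e) [(\<one>\<^bsub>k\<^esub>, [e, e])] \<and>
     eplus B e = \<zero>\<^bsub>k\<^esub> \<and> etimes B e = \<one>\<^bsub>k\<^esub> \<and> antip B e = \<ominus>\<^bsub>P\<^esub> e \<and>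
     (\<forall>c \<in> carrier k. beta B c e = c) \<and>
     (let A2 = tpow k P eta 2; A0 = tpow k P eta 0;
          V2 = Wsalg P B A2; VV2 = Wsalg P B V2;
          V0 = Wsalg P B A0; VV0 = Wsalg P B V0;
          p = upt k P 2 in
       s_eq VV2 (Phi cmp (s_add V2 (p 0) (p 1))) (s_add VV2 (Phi cmp (p 0)) (Phi cmp (p 1))) \<and>
       s_eq VV2 (Phi cmp (s_mul V2 (p 0) (p 1))) (s_mul VV2 (Phi cmp (p 0)) (Phi cmp (p 1))) \<and>
       s_eq VV0 (Phi cmp (s_zero V0)) (s_zero VV0) \<and>
       s_eq VV0 (Phi cmp (s_one V0)) (s_one VV0) \<and>
       (\<forall>c \<in> carrier k. s_eq VV0 (Phi cmp (s_eta V0 c)) (s_eta VV0 c)))"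

definition pring :: "'k ring \<Rightarrow> 'p ring \<Rightarrow> ('k \<Rightarrow> 'p) \<Rightarrow> ('k, 'p) biring_data
    \<Rightarrow> ('p \<Rightarrow> 'p \<Rightarrow> 'p) \<Rightarrow> 'p \<Rightarrow> 'r ring \<Rightarrow> ('k \<Rightarrow> 'r) \<Rightarrow> ('p \<Rightarrow> 'r \<Rightarrow> 'r) \<Rightarrow> bool" where
  "pring k P eta B cmp e R etaR act \<longleftrightarrow>
     kalg k R etaR \<and>
     pact k P eta B R etaR act \<and>
     (\<forall>f \<in> carrier P. \<forall>g \<in> carrier P. \<forall>r \<in> carrier R. act (cmp f g) r = act f (act g r)) \<and>
     (\<forall>r \<in> carrier R. act e r = r)"

definition pring_hom :: "'k ring \<Rightarrow> 'p ring \<Rightarrow> 'r ring \<Rightarrow> ('k \<Rightarrow> 'r) \<Rightarrow> ('p \<Rightarrow> 'r \<Rightarrow> 'r)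
    \<Rightarrow> 's ring \<Rightarrow> ('k \<Rightarrow> 's) \<Rightarrow> ('p \<Rightarrow> 's \<Rightarrow> 's) \<Rightarrow> ('r \<Rightarrow> 's) \<Rightarrow> bool" where
  "pring_hom k P R etaR act S etaS act' h \<longleftrightarrow>
     kalg_hom k R etaR S etaS h \<and>
     (\<forall>f \<in> carrier P. \<forall>r \<in> carrier R. h (act f r) = act' f (h r))"

definition pideal :: "'k ring \<Rightarrow> 'p ring \<Rightarrow> ('k \<Rightarrow> 'p) \<Rightarrow> ('k, 'p) biring_data
    \<Rightarrow> ('p \<Rightarrow> 'p \<Rightarrow> 'p) \<Rightarrow> 'p \<Rightarrow> 'r ring \<Rightarrow> ('k \<Rightarrow> 'r) \<Rightarrow> ('p \<Rightarrow> 'r \<Rightarrow> 'r) \<Rightarrow> 'r set \<Rightarrow> bool" where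
  "pideal k P eta B cmp e R etaR act I \<longleftrightarrow>
     ideal I R \<and>
     (\<exists>act'. pring k P eta B cmp e (R Quot I) (\<lambda>c. I +>\<^bsub>R\<^esub> etaR c) act' \<and>
             pring_hom k P R etaR act (R Quot I) (\<lambda>c. I +>\<^bsub>R\<^esub> etaR c) act' (\<lambda>r. I +>\<^bsub>R\<^esub> r))"

end

theory Submission
  imports Defs
begin

lemma rsum_Nil[simp]: "rsum R [] = \<zero>\<^bsub>R\<^esub>" by (simp add: rsum_def)
lemma rsum_Cons[simp]: "rsum R (x # xs) = x \<oplus>\<^bsub>R\<^esub> rsum R xs" by (simp add: rsum_def)

lemma rsum_carrier:
  assumes "ring R" "\<And>x. x \<in> set xs \<Longrightarrow> g x \<in> carrier R"
  shows "rsum R (map g xs) \<in> carrier R"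
proof -
  interpret ring R by fact
  show ?thesis using assms(2) by (induction xs) auto
qed

lemma rsum_hom:
  assumes "ring R" "ring S" "h \<in> ring_hom R S" "\<And>x. x \<in> set xs \<Longrightarrow> g x \<in> carrier R"
  shows "h (rsum R (map g xs)) = rsum S (map (\<lambda>x. h (g x)) xs)"
proof -
  interpret ring_hom_ring R S h using assms by (simp add: ring_hom_ringI2)
  show ?thesis using assms(4)
  proof (induction xs)
    case Nil then show ?case by simp
  next
    case (Cons a xs)
    have "rsum R (map g xs) \<in> carrier R" using Cons.prems by (intro rsum_carrier[OF assms(1)]) auto
    then show ?case using Cons by simp
  qed
qed

lemma rsum_diff2:
  assumes "cring R" "ideal K R"
    "\<And>x. x \<in> set xs \<Longrightarrow> g1 x \<in> carrier R \<and> g2 x \<in> carrier R \<and> g1 x \<ominus>\<^bsub>R\<^esub> g2 x \<in> K"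
  shows "rsum R (map g1 xs) \<ominus>\<^bsub>R\<^esub> rsum R (map g2 xs) \<in> K"
proof -
  interpret R: cring R by fact
  interpret K: ideal K R by fact
  show ?thesis using assms(3)
  proof (induction xs)
    case Nil then show ?case by (simp add: R.minus_eq)
  next
    case (Cons a xs)
    have c1: "rsum R (map g1 xs) \<in> carrier R" using Cons.prems by (intro rsum_carrier[OF R.ring_axioms]) auto
    have c2: "rsum R (map g2 xs) \<in> carrier R" using Cons.prems by (intro rsum_carrier[OF R.ring_axioms]) auto
    have a: "g1 a \<in> carrier R" "g2 a \<in> carrier R" "g1 a \<ominus>\<^bsub>R\<^esub> g2 a \<in> K" using Cons.prems by auto
    define s1 where "s1 = rsum R (map g1 xs)"
    define s2 where "s2 = rsum R (map g2 xs)"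
    have "s1 \<ominus>\<^bsub>R\<^esub> s2 \<in> K" using Cons by (auto simp: s1_def s2_def)
    moreover have "(g1 a \<oplus>\<^bsub>R\<^esub> s1) \<ominus>\<^bsub>R\<^esub> (g2 a \<oplus>\<^bsub>R\<^esub> s2) = (g1 a \<ominus>\<^bsub>R\<^esub> g2 a) \<oplus>\<^bsub>R\<^esub> (s1 \<ominus>\<^bsub>R\<^esub> s2)"
      using a c1 c2 unfolding s1_def[symmetric] s2_def[symmetric] by algebra
    ultimately show ?case using a by (simp add: K.a_closed s1_def s2_def)
  qed
qed

lemma rsum_diff4:
  assumes "cring R" "ideal K R"
    "\<And>x. x \<in> set xs \<Longrightarrow> g1 x \<in> carrier R \<and> g2 x \<in> carrier R \<and> g3 x \<in> carrier R \<and> g4 x \<in> carrier R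
       \<and> g1 x \<ominus>\<^bsub>R\<^esub> g2 x \<ominus>\<^bsub>R\<^esub> g3 x \<oplus>\<^bsub>R\<^esub> g4 x \<in> K"
  shows "rsum R (map g1 xs) \<ominus>\<^bsub>R\<^esub> rsum R (map g2 xs) \<ominus>\<^bsub>R\<^esub> rsum R (map g3 xs)
     \<oplus>\<^bsub>R\<^esub> rsum R (map g4 xs) \<in> K"
proof -
  interpret R: cring R by fact
  interpret K: ideal K R by fact
  show ?thesis using assms(3)
  proof (induction xs)
    case Nil then show ?case by (simp add: R.minus_eq)
  next
    case (Cons a xs)
    have c1: "rsum R (map g1 xs) \<in> carrier R" using Cons.prems by (intro rsum_carrier[OF R.ring_axioms]) auto
    have c2: "rsum R (map g2 xs) \<in> carrier R" using Cons.prems by (intro rsum_carrier[OF R.ring_axioms]) auto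
    have c3: "rsum R (map g3 xs) \<in> carrier R" using Cons.prems by (intro rsum_carrier[OF R.ring_axioms]) auto
    have c4: "rsum R (map g4 xs) \<in> carrier R" using Cons.prems by (intro rsum_carrier[OF R.ring_axioms]) auto
    have a: "g1 a \<in> carrier R" "g2 a \<in> carrier R" "g3 a \<in> carrier R" "g4 a \<in> carrier R"
      "g1 a \<ominus>\<^bsub>R\<^esub> g2 a \<ominus>\<^bsub>R\<^esub> g3 a \<oplus>\<^bsub>R\<^esub> g4 a \<in> K" using Cons.prems by auto
    define s1 where "s1 = rsum R (map g1 xs)"
    define s2 where "s2 = rsum R (map g2 xs)"
    define s3 where "s3 = rsum R (map g3 xs)"
    define s4 where "s4 = rsum R (map g4 xs)"
    have "s1 \<ominus>\<^bsub>R\<^esub> s2 \<ominus>\<^bsub>R\<^esub> s3 \<oplus>\<^bsub>R\<^esub> s4 \<in> K" using Cons by (auto simp: s1_def s2_def s3_def s4_def)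
    moreover have "(g1 a \<oplus>\<^bsub>R\<^esub> s1) \<ominus>\<^bsub>R\<^esub> (g2 a \<oplus>\<^bsub>R\<^esub> s2) \<ominus>\<^bsub>R\<^esub> (g3 a \<oplus>\<^bsub>R\<^esub> s3) \<oplus>\<^bsub>R\<^esub> (g4 a \<oplus>\<^bsub>R\<^esub> s4)
        = (g1 a \<ominus>\<^bsub>R\<^esub> g2 a \<ominus>\<^bsub>R\<^esub> g3 a \<oplus>\<^bsub>R\<^esub> g4 a) \<oplus>\<^bsub>R\<^esub> (s1 \<ominus>\<^bsub>R\<^esub> s2 \<ominus>\<^bsub>R\<^esub> s3 \<oplus>\<^bsub>R\<^esub> s4)"
      using a c1 c2 c3 c4 unfolding s1_def[symmetric] s2_def[symmetric] s3_def[symmetric] s4_def[symmetric] by algebra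
    ultimately show ?case using a by (simp add: K.a_closed s1_def s2_def s3_def s4_def)
  qed
qed

lemma ring_hom_cong':
  assumes "ring R" "g \<in> ring_hom R S" "\<And>x. x \<in> carrier R \<Longrightarrow> g' x = g x"
  shows "g' \<in> ring_hom R S"
  using assms unfolding ring_hom_def by (auto simp: ring.ring_simprules Pi_def)

lemma pring_facts:
  assumes pl: "plethory k P eta B cmp e" and pr: "pring k P eta B cmp e A etaA act"
  shows "cring k" "cring P" "cring A" "eta \<in> ring_hom k P" "etaA \<in> ring_hom k A" "e \<in> carrier P"
    "\<And>f g. f \<in> carrier P \<Longrightarrow> g \<in> carrier P \<Longrightarrow> cmp f g \<in> carrier P"
    "\<And>f r. f \<in> carrier P \<Longrightarrow> r \<in> carrier A \<Longrightarrow> act f r \<in> carrier A"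
    "\<And>r. r \<in> carrier A \<Longrightarrow> (\<lambda>f. act f r) \<in> ring_hom P A"
    "\<And>r c. r \<in> carrier A \<Longrightarrow> c \<in> carrier k \<Longrightarrow> act (eta c) r = etaA c"
    "\<And>f r r'. f \<in> carrier P \<Longrightarrow> r \<in> carrier A \<Longrightarrow> r' \<in> carrier A \<Longrightarrow>
        act f (r \<oplus>\<^bsub>A\<^esub> r') =
          rsum A (map (\<lambda>(c, w). etaA c \<otimes>\<^bsub>A\<^esub> act (w ! 0) r \<otimes>\<^bsub>A\<^esub> act (w ! 1) r') (dplus B f))"
    "\<And>f r r'. f \<in> carrier P \<Longrightarrow> r \<in> carrier A \<Longrightarrow> r' \<in> carrier A \<Longrightarrow>
        act f (r \<otimes>\<^bsub>A\<^esub> r') =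
          rsum A (map (\<lambda>(c, w). etaA c \<otimes>\<^bsub>A\<^esub> act (w ! 0) r \<otimes>\<^bsub>A\<^esub> act (w ! 1) r') (dtimes B f))"
    "\<And>f c. f \<in> carrier P \<Longrightarrow> c \<in> carrier k \<Longrightarrow> act f (etaA c) = etaA (beta B c f)"
    "\<And>f g r. f \<in> carrier P \<Longrightarrow> g \<in> carrier P \<Longrightarrow> r \<in> carrier A \<Longrightarrow> act (cmp f g) r = act f (act g r)"
    "\<And>r. r \<in> carrier A \<Longrightarrow> act e r = r"
    "\<And>f x. f \<in> carrier P \<Longrightarrow> x \<in> set (dplus B f) \<Longrightarrow> fst x \<in> carrier k \<and> snd x ! 0 \<in> carrier P \<and> snd x ! 1 \<in> carrier P"
    "\<And>f x. f \<in> carrier P \<Longrightarrow> x \<in> set (dtimes B f) \<Longrightarrow> fst x \<in> carrier k \<and> snd x ! 0 \<in> carrier P \<and> snd x ! 1 \<in> carrier P"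
proof -
  have bi: "biring k P eta B" and pa: "pact k P eta B P eta cmp" and ee: "e \<in> carrier P"
    using pl by (simp_all add: plethory_def)
  have ka: "kalg k A etaA" and pA: "pact k P eta B A etaA act"
    and asc: "\<forall>f \<in> carrier P. \<forall>g \<in> carrier P. \<forall>r \<in> carrier A. act (cmp f g) r = act f (act g r)"
    and un: "\<forall>r \<in> carrier A. act e r = r"
    using pr by (simp_all add: pring_def)
  have kP: "kalg k P eta" and fp: "fs_kalg_map k P eta 2 (dplus B)" and ft: "fs_kalg_map k P eta 2 (dtimes B)"
    using bi by (simp_all add: biring_def)
  show "cring k" "cring P" "eta \<in> ring_hom k P" using kP by (simp_all add: kalg_def)
  show "cring A" "etaA \<in> ring_hom k A" using ka by (simp_all add: kalg_def)
  show "e \<in> carrier P" by (rule ee)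
  show "\<And>f g. f \<in> carrier P \<Longrightarrow> g \<in> carrier P \<Longrightarrow> cmp f g \<in> carrier P" using pa by (simp add: pact_def)
  show "\<And>f r. f \<in> carrier P \<Longrightarrow> r \<in> carrier A \<Longrightarrow> act f r \<in> carrier A" using pA by (simp add: pact_def)
  show "\<And>r. r \<in> carrier A \<Longrightarrow> (\<lambda>f. act f r) \<in> ring_hom P A" using pA by (simp add: pact_def kalg_hom_def)
  show "\<And>r c. r \<in> carrier A \<Longrightarrow> c \<in> carrier k \<Longrightarrow> act (eta c) r = etaA c" using pA by (simp add: pact_def kalg_hom_def)
  show "\<And>f r r'. f \<in> carrier P \<Longrightarrow> r \<in> carrier A \<Longrightarrow> r' \<in> carrier A \<Longrightarrow>
        act f (r \<oplus>\<^bsub>A\<^esub> r') =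
          rsum A (map (\<lambda>(c, w). etaA c \<otimes>\<^bsub>A\<^esub> act (w ! 0) r \<otimes>\<^bsub>A\<^esub> act (w ! 1) r') (dplus B f))"
    using pA by (simp add: pact_def)
  show "\<And>f r r'. f \<in> carrier P \<Longrightarrow> r \<in> carrier A \<Longrightarrow> r' \<in> carrier A \<Longrightarrow>
        act f (r \<otimes>\<^bsub>A\<^esub> r') =
          rsum A (map (\<lambda>(c, w). etaA c \<otimes>\<^bsub>A\<^esub> act (w ! 0) r \<otimes>\<^bsub>A\<^esub> act (w ! 1) r') (dtimes B f))"
    using pA by (simp add: pact_def)
  show "\<And>f c. f \<in> carrier P \<Longrightarrow> c \<in> carrier k \<Longrightarrow> act f (etaA c) = etaA (beta B c f)"
    using pA by (simp add: pact_def)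
  show "\<And>f g r. f \<in> carrier P \<Longrightarrow> g \<in> carrier P \<Longrightarrow> r \<in> carrier A \<Longrightarrow> act (cmp f g) r = act f (act g r)"
    using asc by simp
  show "\<And>r. r \<in> carrier A \<Longrightarrow> act e r = r" using un by simp
  show "\<And>f x. f \<in> carrier P \<Longrightarrow> x \<in> set (dplus B f) \<Longrightarrow> fst x \<in> carrier k \<and> snd x ! 0 \<in> carrier P \<and> snd x ! 1 \<in> carrier P"
  proof -
    fix f x assume f: "f \<in> carrier P" and x: "x \<in> set (dplus B f)"
    have "fs_wf k P 2 (dplus B f)" using fp f by (simp add: fs_kalg_map_def)
    then have "fst x \<in> carrier k \<and> length (snd x) = 2 \<and> set (snd x) \<subseteq> carrier P"
      using x unfolding fs_wf_def by (cases x) auto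
    then show "fst x \<in> carrier k \<and> snd x ! 0 \<in> carrier P \<and> snd x ! 1 \<in> carrier P"
      by (auto simp: nth_mem subsetD)
  qed
  show "\<And>f x. f \<in> carrier P \<Longrightarrow> x \<in> set (dtimes B f) \<Longrightarrow> fst x \<in> carrier k \<and> snd x ! 0 \<in> carrier P \<and> snd x ! 1 \<in> carrier P"
  proof -
    fix f x assume f: "f \<in> carrier P" and x: "x \<in> set (dtimes B f)"
    have "fs_wf k P 2 (dtimes B f)" using ft f by (simp add: fs_kalg_map_def)
    then have "fst x \<in> carrier k \<and> length (snd x) = 2 \<and> set (snd x) \<subseteq> carrier P"
      using x unfolding fs_wf_def by (cases x) auto
    then show "fst x \<in> carrier k \<and> snd x ! 0 \<in> carrier P \<and> snd x ! 1 \<in> carrier P"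
      by (auto simp: nth_mem subsetD)
  qed
qed

lemma pideal_of_cong:
  assumes pl: "plethory k P eta B cmp e" and pr: "pring k P eta B cmp e A etaA act"
    and K: "ideal K A"
    and cong: "\<And>f r s. f \<in> carrier P \<Longrightarrow> r \<in> carrier A \<Longrightarrow> s \<in> carrier A \<Longrightarrow>
       r \<ominus>\<^bsub>A\<^esub> s \<in> K \<Longrightarrow> act f r \<ominus>\<^bsub>A\<^esub> act f s \<in> K"
  shows "pideal k P eta B cmp e A etaA act K"
proof -
  note F = pring_facts[OF pl pr]
  interpret A: cring A by (rule F(3))
  interpret K: ideal K A by (rule K)
  define Q where "Q = A Quot K"
  define h where "h = (\<lambda>r. K +>\<^bsub>A\<^esub> r)"
  define act' where "act' = (\<lambda>f X. h (act f (SOME r. r \<in> X)))"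
  have Qc: "cring Q" unfolding Q_def by (rule K.quotient_is_cring[OF A.is_cring])
  interpret Q: cring Q by (rule Qc)
  have hh: "h \<in> ring_hom A Q" unfolding h_def Q_def by (rule K.rcos_ring_hom)
  interpret H: ring_hom_ring A Q h using hh by (simp add: ring_hom_ringI2 A.ring_axioms Q.ring_axioms)
  have carrQ: "carrier Q = h ` carrier A"
    using K by (auto simp: Q_def h_def FactRing_def A_RCOSETS_def RCOSETS_def a_r_coset_def)
  have key: "act' f (h r) = h (act f r)" if f: "f \<in> carrier P" and r: "r \<in> carrier A" for f r
  proof -
    have "r \<in> h r" by (simp add: h_def K.a_rcos_self r)
    hence s: "(SOME s. s \<in> h r) \<in> h r" by (rule someI)
    define s0 where "s0 = (SOME s. s \<in> h r)"
    have s0: "s0 \<in> K +>\<^bsub>A\<^esub> r" using s by (simp add: s0_def h_def)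
    have sA: "s0 \<in> carrier A" using K.a_elemrcos_carrier[OF r s0] .
    have "s0 \<ominus>\<^bsub>A\<^esub> r \<in> K" using K.a_rcos_module_minus[OF A.ring_axioms r sA] s0 by simp
    then have "act f s0 \<ominus>\<^bsub>A\<^esub> act f r \<in> K" using cong f sA r by blast
    then have "act f s0 \<in> K +>\<^bsub>A\<^esub> act f r"
      using K.a_rcos_module_minus[OF A.ring_axioms F(8)[OF f r] F(8)[OF f sA]] by simp
    then have "K +>\<^bsub>A\<^esub> act f r = K +>\<^bsub>A\<^esub> act f s0"
      using K.a_repr_independence' F(8)[OF f r] by blast
    then show ?thesis by (simp add: act'_def h_def s0_def)
  qed
  have etaQ: "(\<lambda>c. h (etaA c)) \<in> ring_hom k Q"
    using ring_hom_trans[OF F(5) hh] by (simp add: comp_def)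
  have pQ: "pring k P eta B cmp e Q (\<lambda>c. h (etaA c)) act'"
    unfolding pring_def
  proof (intro conjI)
    show "kalg k Q (\<lambda>c. h (etaA c))" using F(1) Qc etaQ by (simp add: kalg_def)
    show "pact k P eta B Q (\<lambda>c. h (etaA c)) act'"
      unfolding pact_def
    proof (intro conjI ballI)
      fix f X assume f: "f \<in> carrier P" and X: "X \<in> carrier Q"
      then obtain r where r: "r \<in> carrier A" and Xr: "X = h r" using carrQ by auto
      show "act' f X \<in> carrier Q" using key[OF f r] Xr F(8)[OF f r] by simp
    next
      fix X assume X: "X \<in> carrier Q"
      then obtain r where r: "r \<in> carrier A" and Xr: "X = h r" using carrQ by auto
      have "h \<circ> (\<lambda>f. act f r) \<in> ring_hom P Q" using ring_hom_trans[OF F(9)[OF r] hh] .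
      then have "(\<lambda>f. act' f X) \<in> ring_hom P Q"
        by (rule ring_hom_cong'[OF cring.axioms(1)[OF F(2)]]) (simp add: Xr key r)
      moreover have "\<forall>c\<in>carrier k. act' (eta c) X = h (etaA c)"
        using Xr key r F(10) ring_hom_closed[OF F(4)] by simp
      ultimately show "kalg_hom k P eta Q (\<lambda>c. h (etaA c)) (\<lambda>f. act' f X)"
        by (simp add: kalg_hom_def)
    next
      fix f X Y assume f: "f \<in> carrier P" and X: "X \<in> carrier Q" and Y: "Y \<in> carrier Q"
      obtain r where r: "r \<in> carrier A" and Xr: "X = h r" using X carrQ by auto
      obtain r' where r': "r' \<in> carrier A" and Yr: "Y = h r'" using Y carrQ by auto
      have cl: "\<And>x. x \<in> set (dplus B f) \<Longrightarrow> fst x \<in> carrier k \<and> snd x ! 0 \<in> carrier P \<and> snd x ! 1 \<in> carrier P"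
        using F(16) f by blast
      have cl2: "\<And>x. x \<in> set (dtimes B f) \<Longrightarrow> fst x \<in> carrier k \<and> snd x ! 0 \<in> carrier P \<and> snd x ! 1 \<in> carrier P"
        using F(17) f by blast
      have tc: "(case x of (c, w) \<Rightarrow> etaA c \<otimes>\<^bsub>A\<^esub> act (w ! 0) r \<otimes>\<^bsub>A\<^esub> act (w ! 1) r') \<in> carrier A"
        if "fst x \<in> carrier k \<and> snd x ! 0 \<in> carrier P \<and> snd x ! 1 \<in> carrier P" for x
        using that F(8)[OF _ r] F(8)[OF _ r'] ring_hom_closed[OF F(5)] by (cases x) auto
      have th: "h (case x of (c, w) \<Rightarrow> etaA c \<otimes>\<^bsub>A\<^esub> act (w ! 0) r \<otimes>\<^bsub>A\<^esub> act (w ! 1) r')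
           = (case x of (c, w) \<Rightarrow> h (etaA c) \<otimes>\<^bsub>Q\<^esub> act' (w ! 0) X \<otimes>\<^bsub>Q\<^esub> act' (w ! 1) Y)"
        if "fst x \<in> carrier k \<and> snd x ! 0 \<in> carrier P \<and> snd x ! 1 \<in> carrier P" for x
        using that F(8)[OF _ r] F(8)[OF _ r'] ring_hom_closed[OF F(5)] Xr Yr key r r'
        by (cases x) auto
      show "act' f (X \<oplus>\<^bsub>Q\<^esub> Y) = rsum Q (map (\<lambda>(c, w). h (etaA c) \<otimes>\<^bsub>Q\<^esub> act' (w ! 0) X \<otimes>\<^bsub>Q\<^esub> act' (w ! 1) Y) (dplus B f))"
      proof -
        have "act' f (X \<oplus>\<^bsub>Q\<^esub> Y) = h (act f (r \<oplus>\<^bsub>A\<^esub> r'))"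
          using Xr Yr H.hom_add[OF r r', symmetric] key[OF f A.add.m_closed[OF r r']] by simp
        also have "\<dots> = h (rsum A (map (\<lambda>(c, w). etaA c \<otimes>\<^bsub>A\<^esub> act (w ! 0) r \<otimes>\<^bsub>A\<^esub> act (w ! 1) r') (dplus B f)))"
          using F(11)[OF f r r'] by simp
        also have "\<dots> = rsum Q (map (\<lambda>x. h ((\<lambda>(c, w). etaA c \<otimes>\<^bsub>A\<^esub> act (w ! 0) r \<otimes>\<^bsub>A\<^esub> act (w ! 1) r') x)) (dplus B f))"
          by (rule rsum_hom[OF A.ring_axioms Q.ring_axioms hh]) (use tc cl in blast)
        also have "\<dots> = rsum Q (map (\<lambda>(c, w). h (etaA c) \<otimes>\<^bsub>Q\<^esub> act' (w ! 0) X \<otimes>\<^bsub>Q\<^esub> act' (w ! 1) Y) (dplus B f))"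
          by (rule arg_cong[where f="rsum Q"], rule map_cong[OF HOL.refl]) (use th cl in blast)
        finally show ?thesis .
      qed
      show "act' f (X \<otimes>\<^bsub>Q\<^esub> Y) = rsum Q (map (\<lambda>(c, w). h (etaA c) \<otimes>\<^bsub>Q\<^esub> act' (w ! 0) X \<otimes>\<^bsub>Q\<^esub> act' (w ! 1) Y) (dtimes B f))"
      proof -
        have "act' f (X \<otimes>\<^bsub>Q\<^esub> Y) = h (act f (r \<otimes>\<^bsub>A\<^esub> r'))"
          using Xr Yr H.hom_mult[OF r r', symmetric] key[OF f A.m_closed[OF r r']] by simp
        also have "\<dots> = h (rsum A (map (\<lambda>(c, w). etaA c \<otimes>\<^bsub>A\<^esub> act (w ! 0) r \<otimes>\<^bsub>A\<^esub> act (w ! 1) r') (dtimes B f)))"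
          using F(12)[OF f r r'] by simp
        also have "\<dots> = rsum Q (map (\<lambda>x. h ((\<lambda>(c, w). etaA c \<otimes>\<^bsub>A\<^esub> act (w ! 0) r \<otimes>\<^bsub>A\<^esub> act (w ! 1) r') x)) (dtimes B f))"
          by (rule rsum_hom[OF A.ring_axioms Q.ring_axioms hh]) (use tc cl2 in blast)
        also have "\<dots> = rsum Q (map (\<lambda>(c, w). h (etaA c) \<otimes>\<^bsub>Q\<^esub> act' (w ! 0) X \<otimes>\<^bsub>Q\<^esub> act' (w ! 1) Y) (dtimes B f))"
          by (rule arg_cong[where f="rsum Q"], rule map_cong[OF HOL.refl]) (use th cl2 in blast)
        finally show ?thesis .
      qed
    next
      fix f c assume f: "f \<in> carrier P" and c: "c \<in> carrier k"
      have ec: "etaA c \<in> carrier A" using ring_hom_closed[OF F(5) c] .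
      show "act' f (h (etaA c)) = h (etaA (beta B c f))"
        using key[OF f ec] F(13)[OF f c] by simp
    qed
    show "\<forall>f\<in>carrier P. \<forall>g\<in>carrier P. \<forall>X\<in>carrier Q. act' (cmp f g) X = act' f (act' g X)"
    proof (intro ballI)
      fix f g X assume f: "f \<in> carrier P" and g: "g \<in> carrier P" and X: "X \<in> carrier Q"
      obtain r where r: "r \<in> carrier A" and Xr: "X = h r" using X carrQ by auto
      show "act' (cmp f g) X = act' f (act' g X)"
        using Xr key[OF F(7)[OF f g] r] key[OF g r] key[OF f F(8)[OF g r]] F(14)[OF f g r] by simp
    qed
    show "\<forall>X\<in>carrier Q. act' e X = X"
    proof
      fix X assume X: "X \<in> carrier Q"
      obtain r where r: "r \<in> carrier A" and Xr: "X = h r" using X carrQ by auto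
      show "act' e X = X" using Xr key[OF F(6) r] F(15)[OF r] by simp
    qed
  qed
  have hQ: "pring_hom k P A etaA act Q (\<lambda>c. h (etaA c)) act' h"
    unfolding pring_hom_def kalg_hom_def using hh key F(8) by simp
  show ?thesis
    unfolding pideal_def using K pQ hQ unfolding Q_def h_def by blast
qed

lemma pideal_cong:
  assumes pl: "plethory k P eta B cmp e" and pr: "pring k P eta B cmp e A etaA act"
    and pI: "pideal k P eta B cmp e A etaA act I"
    and f: "f \<in> carrier P" and r: "r \<in> carrier A" and s: "s \<in> carrier A" and rs: "r \<ominus>\<^bsub>A\<^esub> s \<in> I"
  shows "act f r \<ominus>\<^bsub>A\<^esub> act f s \<in> I"
proof -
  note F = pring_facts[OF pl pr]
  interpret A: cring A by (rule F(3))
  have I: "ideal I A" using pI by (simp add: pideal_def)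
  interpret I: ideal I A by (rule I)
  obtain act' where hom: "pring_hom k P A etaA act (A Quot I) (\<lambda>c. I +>\<^bsub>A\<^esub> etaA c) act' (\<lambda>r. I +>\<^bsub>A\<^esub> r)"
    using pI by (auto simp: pideal_def)
  have hc: "\<And>f r. f \<in> carrier P \<Longrightarrow> r \<in> carrier A \<Longrightarrow> I +>\<^bsub>A\<^esub> act f r = act' f (I +>\<^bsub>A\<^esub> r)"
    using hom by (simp add: pring_hom_def)
  have "r \<in> I +>\<^bsub>A\<^esub> s" using I.a_rcos_module_minus[OF A.ring_axioms s r] rs by simp
  then have "I +>\<^bsub>A\<^esub> s = I +>\<^bsub>A\<^esub> r" using I.a_repr_independence' s by blast
  then have "I +>\<^bsub>A\<^esub> act f r = I +>\<^bsub>A\<^esub> act f s" using hc[OF f r] hc[OF f s] by simp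
  then have "act f r \<in> I +>\<^bsub>A\<^esub> act f s" using I.a_rcos_self[OF F(8)[OF f r]] by simp
  then show ?thesis using I.a_rcos_module_minus[OF A.ring_axioms F(8)[OF f s] F(8)[OF f r]] by simp
qed

theorem proposition5p7:
  fixes k :: "'k ring" and P :: "'p ring" and eta :: "'k \<Rightarrow> 'p"
    and B :: "('k, 'p) biring_data" and cmp :: "'p \<Rightarrow> 'p \<Rightarrow> 'p" and e :: 'p
    and A :: "'a ring" and etaA :: "'k \<Rightarrow> 'a" and act :: "'p \<Rightarrow> 'a \<Rightarrow> 'a"
    and I J :: "'a set"
  assumes "cring k"
    and "plethory k P eta B cmp e"
    and "pring k P eta B cmp e A etaA act"
    and "pideal k P eta B cmp e A etaA act I"
    and "pideal k P eta B cmp e A etaA act J"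
  shows "pideal k P eta B cmp e A etaA act (I \<cdot>\<^bsub>A\<^esub> J)"
proof -
  note F = pring_facts[OF assms(2,3)]
  interpret A: cring A by (rule F(3))
  have I: "ideal I A" using assms(4) by (simp add: pideal_def)
  have J: "ideal J A" using assms(5) by (simp add: pideal_def)
  interpret I: ideal I A by (rule I)
  interpret J: ideal J A by (rule J)
  have IJ: "ideal (I \<cdot>\<^bsub>A\<^esub> J) A" by (rule A.ideal_prod_is_ideal[OF I J])
  interpret IJ: ideal "I \<cdot>\<^bsub>A\<^esub> J" A by (rule IJ)
  have cI: "\<And>f r s. f \<in> carrier P \<Longrightarrow> r \<in> carrier A \<Longrightarrow> s \<in> carrier A \<Longrightarrow> r \<ominus>\<^bsub>A\<^esub> s \<in> I
      \<Longrightarrow> act f r \<ominus>\<^bsub>A\<^esub> act f s \<in> I"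
    using pideal_cong[OF assms(2,3,4)] by blast
  have cJ: "\<And>f r s. f \<in> carrier P \<Longrightarrow> r \<in> carrier A \<Longrightarrow> s \<in> carrier A \<Longrightarrow> r \<ominus>\<^bsub>A\<^esub> s \<in> J
      \<Longrightarrow> act f r \<ominus>\<^bsub>A\<^esub> act f s \<in> J"
    using pideal_cong[OF assms(2,3,5)] by blast
  have z: "\<zero>\<^bsub>A\<^esub> \<in> carrier A" by simp
  have step: "act f (x \<oplus>\<^bsub>A\<^esub> y) \<ominus>\<^bsub>A\<^esub> act f x \<in> I \<cdot>\<^bsub>A\<^esub> J"
    if f: "f \<in> carrier P" and x: "x \<in> carrier A" and y: "y \<in> carrier A"
      and H: "\<forall>g\<in>carrier P. act g y \<ominus>\<^bsub>A\<^esub> act g \<zero>\<^bsub>A\<^esub> \<in> I \<cdot>\<^bsub>A\<^esub> J" for f x y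
  proof -
    have e1: "act f (x \<oplus>\<^bsub>A\<^esub> y) = rsum A (map (\<lambda>(c, w). etaA c \<otimes>\<^bsub>A\<^esub> act (w ! 0) x \<otimes>\<^bsub>A\<^esub> act (w ! 1) y) (dplus B f))"
      by (rule F(11)[OF f x y])
    have e2: "act f x = rsum A (map (\<lambda>(c, w). etaA c \<otimes>\<^bsub>A\<^esub> act (w ! 0) x \<otimes>\<^bsub>A\<^esub> act (w ! 1) \<zero>\<^bsub>A\<^esub>) (dplus B f))"
      using F(11)[OF f x z] x by simp
    have "rsum A (map (\<lambda>(c, w). etaA c \<otimes>\<^bsub>A\<^esub> act (w ! 0) x \<otimes>\<^bsub>A\<^esub> act (w ! 1) y) (dplus B f))
       \<ominus>\<^bsub>A\<^esub> rsum A (map (\<lambda>(c, w). etaA c \<otimes>\<^bsub>A\<^esub> act (w ! 0) x \<otimes>\<^bsub>A\<^esub> act (w ! 1) \<zero>\<^bsub>A\<^esub>) (dplus B f)) \<in> I \<cdot>\<^bsub>A\<^esub> J"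
    proof (rule rsum_diff2[OF A.is_cring IJ])
      fix t assume t: "t \<in> set (dplus B f)"
      obtain c w where tcw: "t = (c, w)" by (cases t)
      have cw: "c \<in> carrier k" "w ! 0 \<in> carrier P" "w ! 1 \<in> carrier P" using F(16)[OF f t] tcw by auto
      have ec: "etaA c \<in> carrier A" using ring_hom_closed[OF F(5) cw(1)] .
      have a1: "act (w ! 0) x \<in> carrier A" "act (w ! 1) y \<in> carrier A" "act (w ! 1) \<zero>\<^bsub>A\<^esub> \<in> carrier A"
        using F(8) cw x y z by auto
      have "etaA c \<otimes>\<^bsub>A\<^esub> act (w ! 0) x \<otimes>\<^bsub>A\<^esub> act (w ! 1) y \<ominus>\<^bsub>A\<^esub> etaA c \<otimes>\<^bsub>A\<^esub> act (w ! 0) x \<otimes>\<^bsub>A\<^esub> act (w ! 1) \<zero>\<^bsub>A\<^esub>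
          = (etaA c \<otimes>\<^bsub>A\<^esub> act (w ! 0) x) \<otimes>\<^bsub>A\<^esub> (act (w ! 1) y \<ominus>\<^bsub>A\<^esub> act (w ! 1) \<zero>\<^bsub>A\<^esub>)"
        using ec a1 by algebra
      moreover have "(etaA c \<otimes>\<^bsub>A\<^esub> act (w ! 0) x) \<otimes>\<^bsub>A\<^esub> (act (w ! 1) y \<ominus>\<^bsub>A\<^esub> act (w ! 1) \<zero>\<^bsub>A\<^esub>) \<in> I \<cdot>\<^bsub>A\<^esub> J"
        using IJ.I_l_closed H cw ec a1 by simp
      ultimately show "(\<lambda>(c, w). etaA c \<otimes>\<^bsub>A\<^esub> act (w ! 0) x \<otimes>\<^bsub>A\<^esub> act (w ! 1) y) t \<in> carrier A \<and>
          (\<lambda>(c, w). etaA c \<otimes>\<^bsub>A\<^esub> act (w ! 0) x \<otimes>\<^bsub>A\<^esub> act (w ! 1) \<zero>\<^bsub>A\<^esub>) t \<in> carrier A \<and>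
          (\<lambda>(c, w). etaA c \<otimes>\<^bsub>A\<^esub> act (w ! 0) x \<otimes>\<^bsub>A\<^esub> act (w ! 1) y) t \<ominus>\<^bsub>A\<^esub>
          (\<lambda>(c, w). etaA c \<otimes>\<^bsub>A\<^esub> act (w ! 0) x \<otimes>\<^bsub>A\<^esub> act (w ! 1) \<zero>\<^bsub>A\<^esub>) t \<in> I \<cdot>\<^bsub>A\<^esub> J"
        using tcw ec a1 by simp
    qed
    then show ?thesis using e1 e2 by simp
  qed
  have L0: "\<forall>g\<in>carrier P. act g x \<ominus>\<^bsub>A\<^esub> act g \<zero>\<^bsub>A\<^esub> \<in> I \<cdot>\<^bsub>A\<^esub> J" if "x \<in> I \<cdot>\<^bsub>A\<^esub> J" for x
    using that
  proof (induction x rule: ideal_prod.induct)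
    case (sum s1 s2)
    have s: "s1 \<in> carrier A" "s2 \<in> carrier A" using sum.hyps IJ.a_Hcarr by auto
    show ?case
    proof
      fix g assume g: "g \<in> carrier P"
      have "act g (s1 \<oplus>\<^bsub>A\<^esub> s2) \<ominus>\<^bsub>A\<^esub> act g s1 \<in> I \<cdot>\<^bsub>A\<^esub> J" using step[OF g s sum.IH(2)] .
      moreover have "act g s1 \<ominus>\<^bsub>A\<^esub> act g \<zero>\<^bsub>A\<^esub> \<in> I \<cdot>\<^bsub>A\<^esub> J" using sum.IH(1) g by blast
      ultimately have "(act g (s1 \<oplus>\<^bsub>A\<^esub> s2) \<ominus>\<^bsub>A\<^esub> act g s1) \<oplus>\<^bsub>A\<^esub> (act g s1 \<ominus>\<^bsub>A\<^esub> act g \<zero>\<^bsub>A\<^esub>) \<in> I \<cdot>\<^bsub>A\<^esub> J"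
        by (rule IJ.a_closed)
      moreover have "(act g (s1 \<oplus>\<^bsub>A\<^esub> s2) \<ominus>\<^bsub>A\<^esub> act g s1) \<oplus>\<^bsub>A\<^esub> (act g s1 \<ominus>\<^bsub>A\<^esub> act g \<zero>\<^bsub>A\<^esub>)
          = act g (s1 \<oplus>\<^bsub>A\<^esub> s2) \<ominus>\<^bsub>A\<^esub> act g \<zero>\<^bsub>A\<^esub>"
        using F(8)[OF g] s z A.add.m_closed[OF s] by algebra
      ultimately show "act g (s1 \<oplus>\<^bsub>A\<^esub> s2) \<ominus>\<^bsub>A\<^esub> act g \<zero>\<^bsub>A\<^esub> \<in> I \<cdot>\<^bsub>A\<^esub> J" by simp
    qed
  next
    case (prod i j)
    have ij: "i \<in> carrier A" "j \<in> carrier A" using prod I.a_Hcarr J.a_Hcarr by auto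
    show ?case
    proof
      fix f assume f: "f \<in> carrier P"
      define T where "T = (\<lambda>x y. rsum A (map (\<lambda>(c, w). etaA c \<otimes>\<^bsub>A\<^esub> act (w ! 0) x \<otimes>\<^bsub>A\<^esub> act (w ! 1) y) (dtimes B f)))"
      have Tij: "act f (i \<otimes>\<^bsub>A\<^esub> j) = T i j" unfolding T_def by (rule F(12)[OF f ij])
      have Ti0: "act f \<zero>\<^bsub>A\<^esub> = T i \<zero>\<^bsub>A\<^esub>" unfolding T_def using F(12)[OF f ij(1) z] ij by simp
      have T0j: "act f \<zero>\<^bsub>A\<^esub> = T \<zero>\<^bsub>A\<^esub> j" unfolding T_def using F(12)[OF f z ij(2)] ij by simp
      have T00: "act f \<zero>\<^bsub>A\<^esub> = T \<zero>\<^bsub>A\<^esub> \<zero>\<^bsub>A\<^esub>" unfolding T_def using F(12)[OF f z z] by simp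
      have "T i j \<ominus>\<^bsub>A\<^esub> T i \<zero>\<^bsub>A\<^esub> \<ominus>\<^bsub>A\<^esub> T \<zero>\<^bsub>A\<^esub> j \<oplus>\<^bsub>A\<^esub> T \<zero>\<^bsub>A\<^esub> \<zero>\<^bsub>A\<^esub> \<in> I \<cdot>\<^bsub>A\<^esub> J"
        unfolding T_def
      proof (rule rsum_diff4[OF A.is_cring IJ])
        fix t assume t: "t \<in> set (dtimes B f)"
        obtain c w where tcw: "t = (c, w)" by (cases t)
        have cw: "c \<in> carrier k" "w ! 0 \<in> carrier P" "w ! 1 \<in> carrier P" using F(17)[OF f t] tcw by auto
        have ec: "etaA c \<in> carrier A" using ring_hom_closed[OF F(5) cw(1)] .
        define u where "u = act (w ! 0) i"
        define u0 where "u0 = act (w ! 0) \<zero>\<^bsub>A\<^esub>"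
        define v where "v = act (w ! 1) j"
        define v0 where "v0 = act (w ! 1) \<zero>\<^bsub>A\<^esub>"
        have a1: "u \<in> carrier A" "u0 \<in> carrier A" "v \<in> carrier A" "v0 \<in> carrier A"
          using F(8) cw ij z by (auto simp: u_def u0_def v_def v0_def)
        have uI: "u \<ominus>\<^bsub>A\<^esub> u0 \<in> I" unfolding u_def u0_def
          by (rule cI[OF cw(2) ij(1) z]) (use prod ij in \<open>simp add: A.minus_eq\<close>)
        have vJ: "v \<ominus>\<^bsub>A\<^esub> v0 \<in> J" unfolding v_def v0_def
          by (rule cJ[OF cw(3) ij(2) z]) (use prod ij in \<open>simp add: A.minus_eq\<close>)
        have "(u \<ominus>\<^bsub>A\<^esub> u0) \<otimes>\<^bsub>A\<^esub> (v \<ominus>\<^bsub>A\<^esub> v0) \<in> I \<cdot>\<^bsub>A\<^esub> J" using uI vJ by (rule ideal_prod.prod)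
        then have m: "etaA c \<otimes>\<^bsub>A\<^esub> ((u \<ominus>\<^bsub>A\<^esub> u0) \<otimes>\<^bsub>A\<^esub> (v \<ominus>\<^bsub>A\<^esub> v0)) \<in> I \<cdot>\<^bsub>A\<^esub> J"
          using IJ.I_l_closed ec by simp
        have "etaA c \<otimes>\<^bsub>A\<^esub> u \<otimes>\<^bsub>A\<^esub> v \<ominus>\<^bsub>A\<^esub> etaA c \<otimes>\<^bsub>A\<^esub> u \<otimes>\<^bsub>A\<^esub> v0 \<ominus>\<^bsub>A\<^esub> etaA c \<otimes>\<^bsub>A\<^esub> u0 \<otimes>\<^bsub>A\<^esub> v
            \<oplus>\<^bsub>A\<^esub> etaA c \<otimes>\<^bsub>A\<^esub> u0 \<otimes>\<^bsub>A\<^esub> v0 = etaA c \<otimes>\<^bsub>A\<^esub> ((u \<ominus>\<^bsub>A\<^esub> u0) \<otimes>\<^bsub>A\<^esub> (v \<ominus>\<^bsub>A\<^esub> v0))"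
          using ec a1 by algebra
        with m show "(\<lambda>(c, w). etaA c \<otimes>\<^bsub>A\<^esub> act (w ! 0) i \<otimes>\<^bsub>A\<^esub> act (w ! 1) j) t \<in> carrier A \<and>
          (\<lambda>(c, w). etaA c \<otimes>\<^bsub>A\<^esub> act (w ! 0) i \<otimes>\<^bsub>A\<^esub> act (w ! 1) \<zero>\<^bsub>A\<^esub>) t \<in> carrier A \<and>
          (\<lambda>(c, w). etaA c \<otimes>\<^bsub>A\<^esub> act (w ! 0) \<zero>\<^bsub>A\<^esub> \<otimes>\<^bsub>A\<^esub> act (w ! 1) j) t \<in> carrier A \<and>
          (\<lambda>(c, w). etaA c \<otimes>\<^bsub>A\<^esub> act (w ! 0) \<zero>\<^bsub>A\<^esub> \<otimes>\<^bsub>A\<^esub> act (w ! 1) \<zero>\<^bsub>A\<^esub>) t \<in> carrier A \<and>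
          (\<lambda>(c, w). etaA c \<otimes>\<^bsub>A\<^esub> act (w ! 0) i \<otimes>\<^bsub>A\<^esub> act (w ! 1) j) t \<ominus>\<^bsub>A\<^esub>
          (\<lambda>(c, w). etaA c \<otimes>\<^bsub>A\<^esub> act (w ! 0) i \<otimes>\<^bsub>A\<^esub> act (w ! 1) \<zero>\<^bsub>A\<^esub>) t \<ominus>\<^bsub>A\<^esub>
          (\<lambda>(c, w). etaA c \<otimes>\<^bsub>A\<^esub> act (w ! 0) \<zero>\<^bsub>A\<^esub> \<otimes>\<^bsub>A\<^esub> act (w ! 1) j) t \<oplus>\<^bsub>A\<^esub>
          (\<lambda>(c, w). etaA c \<otimes>\<^bsub>A\<^esub> act (w ! 0) \<zero>\<^bsub>A\<^esub> \<otimes>\<^bsub>A\<^esub> act (w ! 1) \<zero>\<^bsub>A\<^esub>) t \<in> I \<cdot>\<^bsub>A\<^esub> J"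
          using tcw ec a1 by (simp add: u_def u0_def v_def v0_def)
      qed
      moreover have "T i j \<ominus>\<^bsub>A\<^esub> T i \<zero>\<^bsub>A\<^esub> \<ominus>\<^bsub>A\<^esub> T \<zero>\<^bsub>A\<^esub> j \<oplus>\<^bsub>A\<^esub> T \<zero>\<^bsub>A\<^esub> \<zero>\<^bsub>A\<^esub>
          = act f (i \<otimes>\<^bsub>A\<^esub> j) \<ominus>\<^bsub>A\<^esub> act f \<zero>\<^bsub>A\<^esub>"
      proof -
        have "act f (i \<otimes>\<^bsub>A\<^esub> j) \<in> carrier A" "act f \<zero>\<^bsub>A\<^esub> \<in> carrier A"
          using F(8)[OF f] ij z by auto
        then show ?thesis unfolding Tij[symmetric] Ti0[symmetric] T0j[symmetric] T00[symmetric] by algebra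
      qed
      ultimately show "act f (i \<otimes>\<^bsub>A\<^esub> j) \<ominus>\<^bsub>A\<^esub> act f \<zero>\<^bsub>A\<^esub> \<in> I \<cdot>\<^bsub>A\<^esub> J" by simp
    qed
  qed
  show ?thesis
  proof (rule pideal_of_cong[OF assms(2,3) IJ])
    fix f r s assume f: "f \<in> carrier P" and r: "r \<in> carrier A" and s: "s \<in> carrier A"
      and rs: "r \<ominus>\<^bsub>A\<^esub> s \<in> I \<cdot>\<^bsub>A\<^esub> J"
    have d: "r \<ominus>\<^bsub>A\<^esub> s \<in> carrier A" using r s by simp
    have "r = s \<oplus>\<^bsub>A\<^esub> (r \<ominus>\<^bsub>A\<^esub> s)" using r s by algebra
    then show "act f r \<ominus>\<^bsub>A\<^esub> act f s \<in> I \<cdot>\<^bsub>A\<^esub> J"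
      using step[OF f s d L0[OF rs]] by simp
  qed
qed

end
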